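(* Let $G$ be a connected graph with $|V(G)|\ge 3$ and $L(G)=2l(G)$. For any maximum matchings $F_L,F_l$ of $G$ with $\nu(G\setminus F_L)=L(G)$ and $\nu(G\setminus F_l)=l(G)$, every connected component of the subgraph with edge set $F_L\triangle F_l$ (and vertex set $V(F_L\triangle F_l)$) is a path of length $2$.
   Context: Graphs are finite, undirected, without loops or multiple edges. $\nu(G)$ denotes the maximum size of a matching of $G$; a matching is maximum if it has $\nu(G)$ edges. For $F\subseteq E(G)$, $G\setminus F$ is the graph with vertex set $V(G)$ and edge set $E(G)\setminus F$, and $V(F)$ is the set of vertices incident to some edge of $F$. $\triangle$ denotes symmetric difference. Define $L(G)=\max\{\nu(G\setminus F): F \text{ a maximum matching of } G\}$ and $l(G)=\min\{\nu(G\setminus F): F \text{ a maximum matching of } G\}$. *)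

theory Defs
  imports Main
begin

definition graph :: "'a set \<Rightarrow> 'a set set \<Rightarrow> bool" where
  "graph V E \<longleftrightarrow> finite V \<and> (\<forall>e\<in>E. \<exists>u v. e = {u, v} \<and> u \<noteq> v \<and> u \<in> V \<and> v \<in> V)"

definition matching :: "'a set set \<Rightarrow> 'a set set \<Rightarrow> bool" where
  "matching E M \<longleftrightarrow> M \<subseteq> E \<and> (\<forall>e1\<in>M. \<forall>e2\<in>M. e1 \<noteq> e2 \<longrightarrow> e1 \<inter> e2 = {})"

definition nu :: "'a set set \<Rightarrow> nat" where
  "nu E = Max (card ` {M. matching E M})"

definition max_matching :: "'a set set \<Rightarrow> 'a set set \<Rightarrow> bool" where
  "max_matching E M \<longleftrightarrow> matching E M \<and> card M = nu E"

text \<open>L(G) and l(G); G minus F keeps the vertex set, so only edges matter.\<close>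
definition LL :: "'a set set \<Rightarrow> nat" where
  "LL E = Max ((\<lambda>F. nu (E - F)) ` {F. max_matching E F})"

definition ll :: "'a set set \<Rightarrow> nat" where
  "ll E = Min ((\<lambda>F. nu (E - F)) ` {F. max_matching E F})"

definition adj :: "'a set set \<Rightarrow> 'a \<Rightarrow> 'a \<Rightarrow> bool" where
  "adj E u v \<longleftrightarrow> {u, v} \<in> E"

definition connected :: "'a set \<Rightarrow> 'a set set \<Rightarrow> bool" where
  "connected V E \<longleftrightarrow> (\<forall>u\<in>V. \<forall>v\<in>V. (adj E)\<^sup>*\<^sup>* u v)"

definition components :: "'a set \<Rightarrow> 'a set set \<Rightarrow> 'a set set" where
  "components V E = {{v \<in> V. (adj E)\<^sup>*\<^sup>* u v} | u. u \<in> V}"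

definition is_path2 :: "'a set \<Rightarrow> 'a set set \<Rightarrow> bool" where
  "is_path2 C D \<longleftrightarrow> (\<exists>a b c. distinct [a, b, c] \<and> C = {a, b, c} \<and>
      {e \<in> D. e \<subseteq> C} = {{a, b}, {b, c}})"

end

theory Submission
  imports Defs
begin

lemma matchings_finite: "finite E \<Longrightarrow> finite {M. matching E M}"
  unfolding matching_def by (rule finite_subset[of _ "Pow E"]) auto

lemma card_le_nu: "finite E \<Longrightarrow> matching E M \<Longrightarrow> card M \<le> nu E"
  unfolding nu_def using matchings_finite by (intro Max_ge) auto

lemma nu_attained: "finite E \<Longrightarrow> \<exists>M. matching E M \<and> card M = nu E"
proof -
  assume f: "finite E"
  have "matching E {}" by (simp add: matching_def)
  hence "nu E \<in> card ` {M. matching E M}" unfolding nu_def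
    using matchings_finite[OF f] by (intro Max_in) auto
  thus ?thesis by auto
qed

lemma match_uniq: "matching E M \<Longrightarrow> g \<in> M \<Longrightarrow> h \<in> M \<Longrightarrow> x \<in> g \<Longrightarrow> x \<in> h \<Longrightarrow> g = h"
  unfolding matching_def by blast

lemma cover_other: "matching E P \<Longrightarrow> e \<in> P - Q \<Longrightarrow> x \<in> e \<Longrightarrow> f \<in> Q \<Longrightarrow> x \<in> f \<Longrightarrow> f \<in> Q - P"
proof -
  assume a: "matching E P" "e \<in> P - Q" "x \<in> e" "f \<in> Q" "x \<in> f"
  have "f \<notin> P"
  proof
    assume "f \<in> P"
    then have "f = e" using match_uniq[OF a(1), of f e x] a by simp
    then show False using a by simp
  qed
  then show ?thesis using a by simp
qed

lemma H1gen:
  assumes "finite E" "matching E P" "matching E Q" "card Q = nu E" "e \<in> P - Q"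
  shows "\<exists>f\<in>Q-P. e \<inter> f \<noteq> {}"
proof (rule ccontr)
  assume "\<not> ?thesis"
  hence d: "\<forall>f\<in>Q. e \<inter> f = {}" using cover_other[OF assms(2) assms(5)] by blast
  have "matching E (insert e Q)" using assms(2,3,5) d unfolding matching_def by blast
  hence "card (insert e Q) \<le> nu E" using card_le_nu assms(1) by blast
  moreover have "finite Q" using assms(1,3) unfolding matching_def using finite_subset by blast
  ultimately show False using assms(4,5) by simp
qed

lemma struct3:
  assumes two: "\<forall>g\<in>X\<union>Y. \<exists>u v. g={u,v} \<and> u\<noteq>v"
    and dX: "\<forall>g\<in>X. \<forall>h\<in>X. g\<noteq>h \<longrightarrow> g\<inter>h={}"
    and dY: "\<forall>g\<in>Y. \<forall>h\<in>Y. g\<noteq>h \<longrightarrow> g\<inter>h={}"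
    and h1: "\<forall>e\<in>X. \<exists>f\<in>Y. e\<inter>f\<noteq>{}"
    and h2X: "\<forall>e\<in>X. \<forall>x y. e={x,y} \<longrightarrow> x\<noteq>y \<longrightarrow> (\<exists>f\<in>Y. x\<in>f) \<longrightarrow> (\<exists>f\<in>Y. y\<in>f) \<longrightarrow> False"
    and h2Y: "\<forall>f\<in>Y. \<forall>x y. f={x,y} \<longrightarrow> x\<noteq>y \<longrightarrow> (\<exists>e\<in>X. x\<in>e) \<longrightarrow> (\<exists>e\<in>X. y\<in>e) \<longrightarrow> False"
    and e: "e \<in> X"
  shows "\<exists>a b c. distinct [a,b,c] \<and> e={a,b} \<and> {b,c}\<in>Y \<and>
          (\<forall>g\<in>X\<union>Y. g\<inter>{a,b,c}\<noteq>{} \<longrightarrow> g={a,b} \<or> g={b,c})"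
proof -
  obtain x y where xy: "e={x,y}" "x\<noteq>y" using two e by blast
  obtain f where f: "f\<in>Y" "e\<inter>f\<noteq>{}" using h1 e by blast
  obtain a b where ab: "e={a,b}" "a\<noteq>b" "b\<in>f"
  proof (cases "x\<in>f")
    case True then show ?thesis using that[of y x] xy by (auto simp: insert_commute)
  next
    case False then have "y\<in>f" using f xy by auto
    then show ?thesis using that[of x y] xy by auto
  qed
  obtain p q where pq: "f={p,q}" "p\<noteq>q" using two f by blast
  obtain c where c: "f={b,c}" "b\<noteq>c"
  proof (cases "p=b")
    case True then show ?thesis using that[of q] pq by auto
  next
    case False then have "q=b" using pq ab by auto
    then show ?thesis using that[of p] pq by (auto simp: insert_commute)
  qed
  have na: "\<forall>g\<in>Y. a\<notin>g"
  proof (intro ballI notI)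
    fix g assume "g\<in>Y" "a\<in>g"
    then have "\<exists>f\<in>Y. a\<in>f" by blast
    moreover have "\<exists>f'\<in>Y. b\<in>f'" using f ab by blast
    ultimately show False using h2X[rule_format, OF e ab(1) ab(2)] by blast
  qed
  have nc: "\<forall>g\<in>X. c\<notin>g"
  proof (intro ballI notI)
    fix g assume "g\<in>X" "c\<in>g"
    then have "\<exists>e\<in>X. c\<in>e" by blast
    moreover have "\<exists>e'\<in>X. b\<in>e'" using e ab by blast
    ultimately show False using h2Y[rule_format, OF f(1) c(1) c(2)] by blast
  qed
  have ac: "a\<noteq>c" using na f(1) c(1) by auto
  have cl: "\<forall>g\<in>X\<union>Y. g\<inter>{a,b,c}\<noteq>{} \<longrightarrow> g={a,b} \<or> g={b,c}"
  proof (intro ballI impI)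
    fix g assume g: "g\<in>X\<union>Y" "g\<inter>{a,b,c}\<noteq>{}"
    show "g={a,b} \<or> g={b,c}"
    proof (cases "g\<in>X")
      case True
      then have "c\<notin>g" using nc by blast
      then have "g\<inter>e\<noteq>{}" using g(2) ab(1) by auto
      then have "g = e" using dX True e by blast
      then show ?thesis using ab(1) by simp
    next
      case False
      then have gY: "g\<in>Y" using g by blast
      then have "a\<notin>g" using na by blast
      then have "g\<inter>f\<noteq>{}" using g(2) c(1) by auto
      then have "g = f" using dY gY f(1) by blast
      then show ?thesis using c(1) by simp
    qed
  qed
  have dis: "distinct [a,b,c]" using ab(2) c(2) ac by simp
  show ?thesis
    apply (rule exI[of _ a], rule exI[of _ b], rule exI[of _ c])
    using dis ab(1) c(1) f(1) cl by (intro conjI; simp)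
qed

lemma comp:
  assumes "distinct [a,b,c]" "{a,b}\<in>D" "{b,c}\<in>D"
    and cl: "\<forall>g\<in>D. g\<inter>{a,b,c}\<noteq>{} \<longrightarrow> g={a,b} \<or> g={b,c}"
    and ne: "\<forall>g\<in>D. g\<noteq>{}"
    and u: "u\<in>{a,b,c}"
  shows "is_path2 {v\<in>\<Union>D. (adj D)\<^sup>*\<^sup>* u v} D"
proof -
  have r1: "(adj D)\<^sup>*\<^sup>* u v \<Longrightarrow> v \<in> {a,b,c}" for v
  proof (induction rule: rtranclp_induct)
    case base then show ?case using u .
  next
    case (step v w)
    then have "{v,w}\<in>D" by (simp add: adj_def)
    moreover have "{v,w}\<inter>{a,b,c}\<noteq>{}" using step.IH by auto
    ultimately have "{v,w}={a,b} \<or> {v,w}={b,c}" by (rule cl[rule_format])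
    moreover have "w \<in> {v,w}" by simp
    ultimately show ?case by auto
  qed
  have ab: "adj D a b" "adj D b a" "adj D b c" "adj D c b"
    using assms(2,3) by (auto simp: adj_def insert_commute)
  have ub: "(adj D)\<^sup>*\<^sup>* u b" using u ab by auto
  have r2: "v \<in> {a,b,c} \<Longrightarrow> (adj D)\<^sup>*\<^sup>* u v" for v
    using ub ab by (auto intro: rtranclp.rtrancl_into_rtrancl)
  have C: "{v\<in>\<Union>D. (adj D)\<^sup>*\<^sup>* u v} = {a,b,c}"
    using r1 r2 assms(2,3) by blast
  have "{e\<in>D. e \<subseteq> {a,b,c}} = {{a,b},{b,c}}"
  proof
    show "{e\<in>D. e \<subseteq> {a,b,c}} \<subseteq> {{a,b},{b,c}}"
    proof
      fix g assume "g \<in> {e\<in>D. e \<subseteq> {a,b,c}}"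
      then have "g\<in>D" "g\<subseteq>{a,b,c}" by auto
      then have "g\<inter>{a,b,c}\<noteq>{}" using ne by blast
      then show "g\<in>{{a,b},{b,c}}" using cl \<open>g\<in>D\<close> by blast
    qed
  qed (use assms(2,3) in auto)
  then show ?thesis unfolding is_path2_def C using assms(1) by blast
qed


lemma other_end: "e={p,q} \<Longrightarrow> p\<noteq>q \<Longrightarrow> x\<in>e \<Longrightarrow> \<exists>a. e={a,x} \<and> a\<noteq>x"
  by (auto simp: insert_commute)

lemma match_insert: "matching E M \<Longrightarrow> e \<in> E \<Longrightarrow> \<forall>g\<in>M. g\<inter>e={} \<Longrightarrow> matching E (insert e M)"
  unfolding matching_def by blast

lemma match_sub: "matching E M \<Longrightarrow> N \<subseteq> M \<Longrightarrow> N \<subseteq> E' \<Longrightarrow> matching E' N"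
  unfolding matching_def by blast

theorem claim2:
  fixes V :: "'a set" and E FL Fl :: "'a set set"
  assumes "graph V E" and "connected V E" and "card V \<ge> 3"
    and "LL E = 2 * ll E"
    and "max_matching E FL" and "max_matching E Fl"
    and "nu (E - FL) = LL E" and "nu (E - Fl) = ll E"
  shows "\<forall>C \<in> components (\<Union>((FL - Fl) \<union> (Fl - FL))) ((FL - Fl) \<union> (Fl - FL)).
           is_path2 C ((FL - Fl) \<union> (Fl - FL))"
proof -
  define A where "A = FL - Fl"
  define B where "B = Fl - FL"
  have two: "\<forall>e\<in>E. \<exists>u v. e = {u, v} \<and> u \<noteq> v \<and> u \<in> V \<and> v \<in> V"
    and finV: "finite V" using assms(1) unfolding graph_def by auto
  have "E \<subseteq> Pow V" using two by auto
  hence finE: "finite E" using finV by (meson finite_Pow_iff finite_subset)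
  have mL: "matching E FL" and cL: "card FL = nu E" using assms(5) unfolding max_matching_def by auto
  have ml: "matching E Fl" and cl: "card Fl = nu E" using assms(6) unfolding max_matching_def by auto
  have FLE: "FL \<subseteq> E" and FlE: "Fl \<subseteq> E" using mL ml unfolding matching_def by auto
  have finL: "finite FL" and finl: "finite Fl" using FLE FlE finE finite_subset by auto
  obtain M where Mm: "matching (E - FL) M" and cM: "card M = LL E"
    using nu_attained[of "E - FL"] finE assms(7) by auto
  have ME: "M \<subseteq> E - FL" using Mm unfolding matching_def by auto
  have finM: "finite M" using ME finE finite_subset by blast
  have "matching (E - Fl) A" unfolding A_def by (rule match_sub[OF mL]) (use FLE in auto)
  hence k1: "card A \<le> ll E" using card_le_nu[of "E - Fl" A] finE assms(8) by auto
  have cAB: "card A = card B" unfolding A_def B_def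
    using card_Diff_subset_Int[of FL Fl] card_Diff_subset_Int[of Fl FL] finL finl cL cl
    by (simp add: Int_commute)
  have "matching (E - Fl) (M - Fl)" by (rule match_sub[OF Mm]) (use ME in auto)
  hence k2: "card (M - Fl) \<le> ll E" using card_le_nu[of "E - Fl"] finE assms(8) by auto
  have k3: "card (M - Fl) = card M - card (M \<inter> Fl)" by (rule card_Diff_subset_Int) (use finM in simp)
  have k4: "card (M \<inter> Fl) \<le> card M" using finM by (simp add: card_mono)
  have sub: "M \<inter> Fl \<subseteq> B" unfolding B_def using ME by auto
  have finB: "finite B" unfolding B_def using finl by simp
  have k5: "card (M \<inter> Fl) \<le> card B" using card_mono[OF finB sub] .
  have "card (M \<inter> Fl) = card B" using k1 k2 k3 k4 k5 cAB cM assms(4) by linarith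
  hence "M \<inter> Fl = B" using card_subset_eq[OF finB sub] by simp
  hence BM: "B \<subseteq> M" by blast
  have cMFl: "card (M - Fl) = ll E" using k1 k2 k3 k4 k5 cAB cM assms(4) \<open>card (M \<inter> Fl) = card B\<close> by linarith
  have P2: "\<forall>e\<in>A. \<forall>x y. e={x,y} \<longrightarrow> x\<noteq>y \<longrightarrow> (\<exists>f\<in>B. x\<in>f) \<longrightarrow> (\<exists>f\<in>B. y\<in>f) \<longrightarrow> False"
  proof (intro ballI allI impI)
    fix e x y assume e: "e\<in>A" "e={x,y}" "x\<noteq>y" "\<exists>f\<in>B. x\<in>f" "\<exists>f\<in>B. y\<in>f"
    then obtain f1 f2 where f: "f1\<in>B" "x\<in>f1" "f2\<in>B" "y\<in>f2" by blast
    have disj: "\<forall>g\<in>M - Fl. g \<inter> e = {}"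
    proof (intro ballI equals0I)
      fix g z assume g: "g \<in> M - Fl" "z \<in> g \<inter> e"
      then have "z = x \<or> z = y" using e(2) by auto
      then show False
      proof
        assume "z = x"
        then have "g = f1" using match_uniq[OF Mm, of g f1 x] g f BM by auto
        then show False using g f(1) B_def by auto
      next
        assume "z = y"
        then have "g = f2" using match_uniq[OF Mm, of g f2 y] g f BM by auto
        then show False using g f(3) B_def by auto
      qed
    qed
    have eE: "e \<in> E - Fl" using e(1) FLE A_def by auto
    have "matching (E - Fl) (insert e (M - Fl))"
      by (rule match_insert) (fact, fact eE, fact disj)
    hence "card (insert e (M - Fl)) \<le> ll E" using card_le_nu[of "E - Fl"] finE assms(8) by auto
    moreover have "e \<notin> M - Fl" using e(1) ME A_def by auto
    ultimately show False using cMFl finM by simp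
  qed
  have H1A: "\<forall>e\<in>A. \<exists>f\<in>B. e\<inter>f\<noteq>{}"
    using H1gen[OF finE mL ml cl] unfolding A_def B_def by blast
  have H1B: "\<forall>e\<in>B. \<exists>f\<in>A. e\<inter>f\<noteq>{}"
    using H1gen[OF finE ml mL cL] unfolding A_def B_def by blast
  have P3: "\<forall>f\<in>B. \<forall>x y. f={x,y} \<longrightarrow> x\<noteq>y \<longrightarrow> (\<exists>e\<in>A. x\<in>e) \<longrightarrow> (\<exists>e\<in>A. y\<in>e) \<longrightarrow> False"
  proof (intro ballI allI impI)
    fix f x y assume f: "f\<in>B" "f={x,y}" "x\<noteq>y" "\<exists>e\<in>A. x\<in>e" "\<exists>e\<in>A. y\<in>e"
    then obtain e1 e2 where e: "e1\<in>A" "x\<in>e1" "e2\<in>A" "y\<in>e2" by blast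
    have e1E: "e1 \<in> E" and e2E: "e2 \<in> E" using e FLE A_def by auto
    obtain p q where "e1={p,q}" "p\<noteq>q" using two e1E by blast
    then obtain a where a: "e1={a,x}" "a\<noteq>x" using other_end e(2) by blast
    obtain p' q' where "e2={p',q'}" "p'\<noteq>q'" using two e2E by blast
    then obtain d where d: "e2={d,y}" "d\<noteq>y" using other_end e(4) by blast
    have naB: "\<forall>g\<in>B. a\<notin>g"
    proof (intro ballI notI)
      fix g assume "g\<in>B" "a\<in>g"
      then have "\<exists>f\<in>B. a\<in>f" by blast
      moreover have "\<exists>f'\<in>B. x\<in>f'" using f by blast
      ultimately show False using P2[rule_format, OF e(1) a(1) a(2)] by blast
    qed
    have na: "\<forall>g\<in>Fl. a\<notin>g"
      using naB cover_other[OF mL, of e1 Fl a] e(1) a(1) unfolding A_def B_def by blast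
    have ndB: "\<forall>g\<in>B. d\<notin>g"
    proof (intro ballI notI)
      fix g assume "g\<in>B" "d\<in>g"
      then have "\<exists>f\<in>B. d\<in>f" by blast
      moreover have "\<exists>f'\<in>B. y\<in>f'" using f by blast
      ultimately show False using P2[rule_format, OF e(3) d(1) d(2)] by blast
    qed
    have nd: "\<forall>g\<in>Fl. d\<notin>g"
      using ndB cover_other[OF mL, of e2 Fl d] e(3) d(1) unfolding A_def B_def by blast
    have fFl: "f \<in> Fl" using f(1) B_def by auto
    have "e1 \<noteq> e2"
    proof
      assume "e1 = e2"
      then have "y \<in> {a,x}" using e(4) a(1) by simp
      then have "y = a" using f(3) by auto
      then show False using na fFl f(2) by auto
    qed
    hence e12: "e1 \<inter> e2 = {}" using mL e A_def unfolding matching_def by auto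
    have m0: "matching E (Fl - {f})" by (rule match_sub[OF ml]) (use FlE in auto)
    have d2: "\<forall>g\<in>Fl - {f}. g \<inter> e2 = {}"
    proof (intro ballI equals0I)
      fix g z assume g: "g \<in> Fl - {f}" "z \<in> g \<inter> e2"
      then have "z = d \<or> z = y" using d(1) by auto
      then show False
      proof
        assume "z = d" then show False using nd g by auto
      next
        assume "z = y"
        then have "g = f" using match_uniq[OF ml, of g f y] g fFl f(2) by auto
        then show False using g by auto
      qed
    qed
    have m1: "matching E (insert e2 (Fl - {f}))" by (rule match_insert[OF m0 e2E d2])
    have d1: "\<forall>g\<in>insert e2 (Fl - {f}). g \<inter> e1 = {}"
    proof (intro ballI equals0I)
      fix g z assume g: "g \<in> insert e2 (Fl - {f})" "z \<in> g \<inter> e1"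
      show False
      proof (cases "g = e2")
        case True then show False using e12 g by auto
      next
        case False
        then have g': "g \<in> Fl - {f}" using g by auto
        have "z = a \<or> z = x" using g a(1) by auto
        then show False
        proof
          assume "z = a" then show False using na g' g by auto
        next
          assume "z = x"
          then have "g = f" using match_uniq[OF ml, of g f x] g' g fFl f(2) by auto
          then show False using g' by auto
        qed
      qed
    qed
    have m2: "matching E (insert e1 (insert e2 (Fl - {f})))" by (rule match_insert[OF m1 e1E d1])
    hence le: "card (insert e1 (insert e2 (Fl - {f}))) \<le> nu E" using card_le_nu finE by blast
    have "e1 \<notin> Fl" "e2 \<notin> Fl" using e A_def by auto
    hence "card (insert e1 (insert e2 (Fl - {f}))) = card (Fl - {f}) + 2"
      using \<open>e1 \<noteq> e2\<close> finl by simp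
    moreover have "card (Fl - {f}) = card Fl - 1" using fFl finl by simp
    moreover have "card Fl \<ge> 1" using fFl finl card_0_eq by fastforce
    ultimately show False using le cl by linarith
  qed
  have ABE: "A \<union> B \<subseteq> E" using FLE FlE unfolding A_def B_def by auto
  have twoD: "\<forall>g\<in>A \<union> B. \<exists>u v. g={u,v} \<and> u\<noteq>v"
  proof
    fix g assume "g \<in> A \<union> B"
    then have "g \<in> E" using ABE by auto
    then obtain u v where "g = {u,v}" "u \<noteq> v" using two by meson
    then show "\<exists>u v. g={u,v} \<and> u\<noteq>v" by auto
  qed
  have dA: "\<forall>g\<in>A. \<forall>h\<in>A. g\<noteq>h \<longrightarrow> g\<inter>h={}" using mL A_def unfolding matching_def by auto
  have dB: "\<forall>g\<in>B. \<forall>h\<in>B. g\<noteq>h \<longrightarrow> g\<inter>h={}" using ml B_def unfolding matching_def by auto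
  have neD: "\<forall>g\<in>A \<union> B. g\<noteq>{}"
  proof
    fix g assume "g \<in> A \<union> B"
    then obtain u v where "g = {u,v}" using twoD by meson
    then show "g \<noteq> {}" by auto
  qed
  have main: "\<forall>C \<in> components (\<Union>(A \<union> B)) (A \<union> B). is_path2 C (A \<union> B)"
  proof
    fix C assume "C \<in> components (\<Union>(A \<union> B)) (A \<union> B)"
    then have "\<exists>u. C = {v \<in> \<Union>(A \<union> B). (adj (A \<union> B))\<^sup>*\<^sup>* u v} \<and> u \<in> \<Union>(A \<union> B)"
      unfolding components_def by simp
    then obtain u where u: "u \<in> \<Union>(A \<union> B)" and C: "C = {v \<in> \<Union>(A \<union> B). (adj (A \<union> B))\<^sup>*\<^sup>* u v}"
      by blast
    then obtain g where g: "g \<in> A \<union> B" "u \<in> g" by blast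
    show "is_path2 C (A \<union> B)"
    proof (cases "g \<in> A")
      case True
      from struct3[OF twoD dA dB H1A P2 P3 True] obtain a b c where
        s: "distinct [a,b,c]" "g={a,b}" "{b,c}\<in>B" "\<forall>h\<in>A\<union>B. h\<inter>{a,b,c}\<noteq>{} \<longrightarrow> h={a,b} \<or> h={b,c}"
        by blast
      show ?thesis unfolding C
        by (rule comp[OF s(1) _ _ s(4) neD]) (use s True g in auto)
    next
      case False
      then have gB: "g \<in> B" using g by auto
      have twoD': "\<forall>g\<in>B \<union> A. \<exists>u v. g={u,v} \<and> u\<noteq>v" using twoD by (simp add: Un_commute)
      from struct3[OF twoD' dB dA H1B P3 P2 gB] obtain a b c where
        s: "distinct [a,b,c]" "g={a,b}" "{b,c}\<in>A" "\<forall>h\<in>B\<union>A. h\<inter>{a,b,c}\<noteq>{} \<longrightarrow> h={a,b} \<or> h={b,c}"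
        by blast
      have s4: "\<forall>h\<in>A\<union>B. h\<inter>{a,b,c}\<noteq>{} \<longrightarrow> h={a,b} \<or> h={b,c}" using s(4) by (simp add: Un_commute)
      show ?thesis unfolding C
        by (rule comp[OF s(1) _ _ s4 neD]) (use s gB g in auto)
    qed
  qed
  then show ?thesis unfolding A_def B_def .
qed

end
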